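(* Let $E$ be a Banach space, $P$ a metric space, and $F:[0,+\infty)\times E\times P\to E$ continuous, continuous uniformly with respect to the first variable, such that $\{F(t,\bar u,\mu)\mid t\geq0\}$ is relatively compact for all $\bar u\in E$, $\mu\in P$, and such that there is a continuous $\widehat F:E\times P\to E$ with $\widehat F(\bar u,\mu)=\lim_{T\to+\infty,\ \bar v\to\bar u,\ \nu\to\mu}\frac1T\int_0^TF(\tau+h,\bar v,\nu)\,d\tau$ for all $\bar u\in E$, $\mu\in P$, $h>0$, uniformly with respect to $h>0$. Let $Q\subset E$ be compact. Then for any $(T_n)$ in $(0,+\infty)$ with $T_n\to+\infty$ and $(\mu_n)$ in $P$ with $\mu_n\to\mu_0$, the convergence $\lim_{n\to+\infty}\frac1{T_n}\int_0^{T_n}F(\tau+h,\bar w,\mu_n)\,d\tau=\widehat F(\bar w,\mu_0)$ is uniform with respect to $\bar w\in Q$ and $h>0$. *)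

theory Defs
  imports "HOL-Analysis.Analysis"
begin

end

theory Submission
  imports Defs
begin

theorem lemma2p4:
  fixes F :: "real \<Rightarrow> 'e::banach \<Rightarrow> 'p::metric_space \<Rightarrow> 'e"
    and Fhat :: "'e \<Rightarrow> 'p \<Rightarrow> 'e"
    and Q :: "'e set"
  assumes F_cont: "continuous_on ({0..} \<times> UNIV \<times> UNIV) (\<lambda>(t, u, \<mu>). F t u \<mu>)"
    and F_unif_cont: "\<And>u \<mu> \<epsilon>. \<epsilon> > 0 \<Longrightarrow> \<exists>\<delta>>0. \<forall>t\<ge>0. \<forall>v \<nu>.
            dist v u < \<delta> \<and> dist \<nu> \<mu> < \<delta> \<longrightarrow> dist (F t v \<nu>) (F t u \<mu>) < \<epsilon>"
    and F_relcompact: "\<And>u \<mu>. compact (closure ((\<lambda>t. F t u \<mu>) ` {0..}))"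
    and Fhat_cont: "continuous_on UNIV (\<lambda>(u, \<mu>). Fhat u \<mu>)"
    and Fhat_avg: "\<And>u \<mu> \<epsilon>. \<epsilon> > 0 \<Longrightarrow> \<exists>T0>0. \<exists>\<delta>>0. \<forall>h>0. \<forall>T\<ge>T0. \<forall>v \<nu>.
            dist v u < \<delta> \<and> dist \<nu> \<mu> < \<delta> \<longrightarrow>
            norm ((1 / T) *\<^sub>R integral {0..T} (\<lambda>\<tau>. F (\<tau> + h) v \<nu>) - Fhat u \<mu>) < \<epsilon>"
    and Q_compact: "compact Q"
  shows "\<forall>(Ts :: nat \<Rightarrow> real) (\<mu>s :: nat \<Rightarrow> 'p) \<mu>0.
           (\<forall>n. Ts n > 0) \<longrightarrow> filterlim Ts at_top sequentially \<longrightarrow> \<mu>s \<longlonglongrightarrow> \<mu>0 \<longrightarrow>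
           (\<forall>\<epsilon>>0. \<exists>N. \<forall>n\<ge>N. \<forall>w\<in>Q. \<forall>h>0.
              norm ((1 / Ts n) *\<^sub>R integral {0..Ts n} (\<lambda>\<tau>. F (\<tau> + h) w (\<mu>s n)) - Fhat w \<mu>0) < \<epsilon>)"
proof (intro allI impI)
  fix Ts :: "nat \<Rightarrow> real" and \<mu>s :: "nat \<Rightarrow> 'p" and \<mu>0 :: 'p and \<epsilon> :: real
  assume Tpos: "\<forall>n. Ts n > 0" and Tlim: "filterlim Ts at_top sequentially"
    and mlim: "\<mu>s \<longlonglongrightarrow> \<mu>0" and ep: "\<epsilon> > 0"
  have hc: "continuous_on UNIV (\<lambda>w. Fhat w \<mu>0)"
    using continuous_on_compose2[OF Fhat_cont, of UNIV "\<lambda>w. (w, \<mu>0)"]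
    by (simp add: continuous_on_Pair)
  have ex: "\<exists>T0 d. T0 > 0 \<and> d > 0 \<and> (\<forall>h>0. \<forall>T\<ge>T0. \<forall>v \<nu>. dist v u < d \<and> dist \<nu> \<mu>0 < d \<longrightarrow>
            norm ((1 / T) *\<^sub>R integral {0..T} (\<lambda>\<tau>. F (\<tau> + h) v \<nu>) - Fhat u \<mu>0) < \<epsilon>/2)
          \<and> (\<forall>w. dist w u < d \<longrightarrow> dist (Fhat w \<mu>0) (Fhat u \<mu>0) < \<epsilon>/2)" for u
  proof -
    obtain T0 d1 where T0: "T0 > 0" "d1 > 0" and H: "\<forall>h>0. \<forall>T\<ge>T0. \<forall>v \<nu>. dist v u < d1 \<and> dist \<nu> \<mu>0 < d1 \<longrightarrow>
            norm ((1 / T) *\<^sub>R integral {0..T} (\<lambda>\<tau>. F (\<tau> + h) v \<nu>) - Fhat u \<mu>0) < \<epsilon>/2"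
      using Fhat_avg[of "\<epsilon>/2" u \<mu>0] ep by auto
    obtain d2 where d2: "d2 > 0" "\<forall>w. dist w u < d2 \<longrightarrow> dist (Fhat w \<mu>0) (Fhat u \<mu>0) < \<epsilon>/2"
      using hc ep unfolding continuous_on_iff by (metis UNIV_I half_gt_zero)
    show ?thesis
      apply (rule exI[of _ T0], rule exI[of _ "min d1 d2"])
      using T0 H d2 by auto
  qed
  then obtain T0 d where TD: "\<And>u. T0 u > 0" "\<And>u. d u > 0"
    "\<And>u h T v \<nu>. h > 0 \<Longrightarrow> T \<ge> T0 u \<Longrightarrow> dist v u < d u \<Longrightarrow> dist \<nu> \<mu>0 < d u \<Longrightarrow>
            norm ((1 / T) *\<^sub>R integral {0..T} (\<lambda>\<tau>. F (\<tau> + h) v \<nu>) - Fhat u \<mu>0) < \<epsilon>/2"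
    "\<And>u w. dist w u < d u \<Longrightarrow> dist (Fhat w \<mu>0) (Fhat u \<mu>0) < \<epsilon>/2"
    by metis
  have "Q \<subseteq> (\<Union>u\<in>Q. ball u (d u))" using TD(2) by auto
  then obtain K where K: "K \<subseteq> Q" "finite K" "Q \<subseteq> (\<Union>u\<in>K. ball u (d u))"
    using compactE_image[OF Q_compact, of Q "\<lambda>u. ball u (d u)"] by auto
  define TM where "TM = Max (insert 1 (T0 ` K))"
  define dm where "dm = Min (insert 1 (d ` K))"
  have TM: "\<And>u. u \<in> K \<Longrightarrow> T0 u \<le> TM" unfolding TM_def using K(2) by auto
  have dmpos: "dm > 0" unfolding dm_def using K(2) TD(2) by auto
  have dm: "\<And>u. u \<in> K \<Longrightarrow> dm \<le> d u" unfolding dm_def using K(2) by auto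
  obtain N1 where N1: "\<And>n. n \<ge> N1 \<Longrightarrow> Ts n \<ge> TM"
    using Tlim unfolding filterlim_at_top eventually_sequentially by blast
  obtain N2 where N2: "\<And>n. n \<ge> N2 \<Longrightarrow> dist (\<mu>s n) \<mu>0 < dm"
    using mlim dmpos unfolding lim_sequentially by blast
  show "\<exists>N. \<forall>n\<ge>N. \<forall>w\<in>Q. \<forall>h>0.
              norm ((1 / Ts n) *\<^sub>R integral {0..Ts n} (\<lambda>\<tau>. F (\<tau> + h) w (\<mu>s n)) - Fhat w \<mu>0) < \<epsilon>"
  proof (intro exI[of _ "max N1 N2"] allI impI ballI)
    fix n w h assume n: "max N1 N2 \<le> n" and w: "w \<in> Q" and h: "(0::real) < h"
    obtain u where u: "u \<in> K" "dist w u < d u" using K(3) w by (auto simp: dist_commute)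
    have a: "norm ((1 / Ts n) *\<^sub>R integral {0..Ts n} (\<lambda>\<tau>. F (\<tau> + h) w (\<mu>s n)) - Fhat u \<mu>0) < \<epsilon>/2"
      apply (rule TD(3)[OF h _ u(2)])
      using N1[of n] TM[OF u(1)] n apply simp
      using N2[of n] dm[OF u(1)] n by simp
    have b: "norm (Fhat w \<mu>0 - Fhat u \<mu>0) < \<epsilon>/2" using TD(4)[OF u(2)] by (simp add: dist_norm)
    have "norm ((1 / Ts n) *\<^sub>R integral {0..Ts n} (\<lambda>\<tau>. F (\<tau> + h) w (\<mu>s n)) - Fhat w \<mu>0)
       \<le> norm ((1 / Ts n) *\<^sub>R integral {0..Ts n} (\<lambda>\<tau>. F (\<tau> + h) w (\<mu>s n)) - Fhat u \<mu>0) + norm (Fhat w \<mu>0 - Fhat u \<mu>0)"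
      using norm_triangle_ineq4[of "(1 / Ts n) *\<^sub>R integral {0..Ts n} (\<lambda>\<tau>. F (\<tau> + h) w (\<mu>s n)) - Fhat u \<mu>0" "Fhat w \<mu>0 - Fhat u \<mu>0"] by simp
    then show "norm ((1 / Ts n) *\<^sub>R integral {0..Ts n} (\<lambda>\<tau>. F (\<tau> + h) w (\<mu>s n)) - Fhat w \<mu>0) < \<epsilon>"
      using a b by linarith
  qed
qed

end
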